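(* Let $\Gamma$ be a finite group, $\theta:\Gamma\to O(\mathbb{R}^d)$ a point group, and let $(G,p)$ be a bar-joint framework with $V(G)=\Gamma\times\hat V$ that is $\theta$-symmetric, with quotient $\Gamma$-gain graph $G/\Gamma$ (so $G$ is the lift of $G/\Gamma$), and with $p\in\mathcal{C}_\theta(V)$. If $(G,p)$ is universally rigid, then the problem (P$^\Gamma$): find $X\in(\mathcal{L}^V)^\Gamma_+$ with $\langle X,F_{(u,v,\gamma)}\rangle=\langle P^\top P,F_{(u,v,\gamma)}\rangle$ for all $(u,v,\gamma)\in E(G/\Gamma)$, has the unique solution $P^\top P$.
   Context: A bar-joint framework $(G,p)$ is a tensegrity with all edges bars: $G=(V,E)$ finite simple graph, $p:V\to\mathbb{R}^d$; it is universally rigid if for every $d'\geq d$ every $q:V\to\mathbb{R}^{d'}$ with $\|q_i-q_j\|=\|p_i-p_j\|$ for all $ij\in E$ satisfies $\|q_i-q_j\|=\|p_i-p_j\|$ for all $i,j\in V$. A $\Gamma$-gain graph on $\hat V$ is a set of triples $(u,v,\gamma)\in\hat V\times\hat V\times\Gamma$ up to $(u,v,\gamma)\sim(v,u,\gamma^{-1})$; its lift is the graph on $\Gamma\times\hat V$ with $\{(\alpha,u),(\beta,v)\}$ an edge iff $(u,v,\alpha^{-1}\beta)$ is in the gain graph. $p$ is compatible with $\theta$ if $\theta(\gamma)p_{(\alpha,v)}=p_{(\gamma\alpha,v)}$ for all $\gamma,\alpha,v$; $\mathcal{C}_\theta(V)$ is the set of compatible configurations with $\sum_{i\in V}p_i=\mathbf{0}$.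 $(G,p)$ is $\theta$-symmetric if $G$ is the lift of a $\Gamma$-gain graph and $p$ is compatible with $\theta$. $P$ is the $d\times|V|$ matrix with columns $p_i$, $P^\top P$ its Gram matrix. $F_{ij}=(\mathbf{e}_i-\mathbf{e}_j)(\mathbf{e}_i-\mathbf{e}_j)^\top$ and $F_{(u,v,\gamma)}=\sum_{\alpha\in\Gamma}F_{(\alpha,u)(\alpha\gamma,v)}$. $(\mathcal{L}^V)^\Gamma_+$ is the set of positive semidefinite symmetric $V\times V$ matrices $L$ with $L\mathbf{1}_V=\mathbf{0}$ and $L[(\alpha,u),(\beta,v)]=L[(\gamma\alpha,u),(\gamma\beta,v)]$ for all $\alpha,\beta,\gamma\in\Gamma$, $u,v\in\hat V$. $\langle A,B\rangle=\operatorname{tr}(AB)$. *)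

theory Defs
  imports "HOL-Analysis.Analysis" "HOL-Algebra.Group"
begin

text \<open>Matrices indexed by vertices are functions 'i => 'i => real; only entries on V x V matter.\<close>

definition point_group :: "('g,'b) monoid_scheme \<Rightarrow> ('g \<Rightarrow> real^'d^'d) \<Rightarrow> bool" where
  "point_group Gm \<theta> \<longleftrightarrow>
     (\<forall>g\<in>carrier Gm. orthogonal_matrix (\<theta> g)) \<and>
     (\<forall>g\<in>carrier Gm. \<forall>h\<in>carrier Gm. \<theta> (g \<otimes>\<^bsub>Gm\<^esub> h) = \<theta> g ** \<theta> h)"

text \<open>Gain graph: a set of triples (u,v,gamma), read up to (u,v,gamma) ~ (v,u,gamma^-1).
  Adjacency in its lift on Gamma x Vhat.\<close>
definition lift_adj :: "('g,'b) monoid_scheme \<Rightarrow> ('v \<times> 'v \<times> 'g) set \<Rightarrow> 'g \<times> 'v \<Rightarrow> 'g \<times> 'v \<Rightarrow> bool" where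
  "lift_adj Gm Eh x y \<longleftrightarrow> fst x \<in> carrier Gm \<and> fst y \<in> carrier Gm \<and>
     ((snd x, snd y, inv\<^bsub>Gm\<^esub> (fst x) \<otimes>\<^bsub>Gm\<^esub> fst y) \<in> Eh \<or>
      (snd y, snd x, inv\<^bsub>Gm\<^esub> (fst y) \<otimes>\<^bsub>Gm\<^esub> fst x) \<in> Eh)"

definition edist :: "nat \<Rightarrow> (nat \<Rightarrow> real) \<Rightarrow> (nat \<Rightarrow> real) \<Rightarrow> real" where
  "edist d' x y = sqrt (\<Sum>k<d'. (x k - y k)^2)"

definition universally_rigid :: "'i set \<Rightarrow> ('i \<Rightarrow> 'i \<Rightarrow> bool) \<Rightarrow> ('i \<Rightarrow> real^'d) \<Rightarrow> bool" where
  "universally_rigid V adj p \<longleftrightarrow>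
     (\<forall>d'::nat. d' \<ge> CARD('d) \<longrightarrow>
       (\<forall>q :: 'i \<Rightarrow> nat \<Rightarrow> real. (\<forall>i k. d' \<le> k \<longrightarrow> q i k = 0) \<longrightarrow>
          (\<forall>i\<in>V. \<forall>j\<in>V. adj i j \<longrightarrow> edist d' (q i) (q j) = norm (p i - p j)) \<longrightarrow>
          (\<forall>i\<in>V. \<forall>j\<in>V. edist d' (q i) (q j) = norm (p i - p j))))"

definition compatible :: "('g,'b) monoid_scheme \<Rightarrow> 'v set \<Rightarrow> ('g \<Rightarrow> real^'d^'d) \<Rightarrow> ('g \<times> 'v \<Rightarrow> real^'d) \<Rightarrow> bool" where
  "compatible Gm Vh \<theta> p \<longleftrightarrow>
     (\<forall>\<gamma>\<in>carrier Gm. \<forall>\<alpha>\<in>carrier Gm. \<forall>v\<in>Vh. \<theta> \<gamma> *v p (\<alpha>, v) = p (\<gamma> \<otimes>\<^bsub>Gm\<^esub> \<alpha>, v))"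

definition C_theta :: "('g,'b) monoid_scheme \<Rightarrow> 'v set \<Rightarrow> ('g \<Rightarrow> real^'d^'d) \<Rightarrow> ('g \<times> 'v \<Rightarrow> real^'d) set" where
  "C_theta Gm Vh \<theta> = {p. compatible Gm Vh \<theta> p \<and> (\<Sum>i\<in>carrier Gm \<times> Vh. p i) = 0}"

definition gram :: "('i \<Rightarrow> real^'d) \<Rightarrow> 'i \<Rightarrow> 'i \<Rightarrow> real" where
  "gram p i j = p i \<bullet> p j"

definition Fmat :: "'i \<Rightarrow> 'i \<Rightarrow> 'i \<Rightarrow> 'i \<Rightarrow> real" where
  "Fmat a b = (\<lambda>i j. ((if i = a then 1 else 0) - (if i = b then 1 else 0)) *
                      ((if j = a then 1 else 0) - (if j = b then 1 else 0)))"

definition Fgain :: "('g,'b) monoid_scheme \<Rightarrow> 'v \<Rightarrow> 'v \<Rightarrow> 'g \<Rightarrow> 'g \<times> 'v \<Rightarrow> 'g \<times> 'v \<Rightarrow> real" where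
  "Fgain Gm u v \<gamma> = (\<lambda>i j. \<Sum>\<alpha>\<in>carrier Gm. Fmat (\<alpha>, u) (\<alpha> \<otimes>\<^bsub>Gm\<^esub> \<gamma>, v) i j)"

definition frob :: "'i set \<Rightarrow> ('i \<Rightarrow> 'i \<Rightarrow> real) \<Rightarrow> ('i \<Rightarrow> 'i \<Rightarrow> real) \<Rightarrow> real" where
  "frob V A B = (\<Sum>i\<in>V. \<Sum>j\<in>V. A i j * B j i)"

definition inv_psd_laplacians :: "('g,'b) monoid_scheme \<Rightarrow> 'v set \<Rightarrow> ('g \<times> 'v \<Rightarrow> 'g \<times> 'v \<Rightarrow> real) set" where
  "inv_psd_laplacians Gm Vh = {L.
     (\<forall>i\<in>carrier Gm \<times> Vh. \<forall>j\<in>carrier Gm \<times> Vh. L i j = L j i) \<and>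
     (\<forall>x. 0 \<le> (\<Sum>i\<in>carrier Gm \<times> Vh. \<Sum>j\<in>carrier Gm \<times> Vh. x i * L i j * x j)) \<and>
     (\<forall>i\<in>carrier Gm \<times> Vh. (\<Sum>j\<in>carrier Gm \<times> Vh. L i j) = 0) \<and>
     (\<forall>\<alpha>\<in>carrier Gm. \<forall>\<beta>\<in>carrier Gm. \<forall>\<gamma>\<in>carrier Gm. \<forall>u\<in>Vh. \<forall>v\<in>Vh.
        L (\<alpha>, u) (\<beta>, v) = L (\<gamma> \<otimes>\<^bsub>Gm\<^esub> \<alpha>, u) (\<gamma> \<otimes>\<^bsub>Gm\<^esub> \<beta>, v))}"

end

theory Submission
  imports Defs
begin

lemma quad_insert:
  fixes X :: "'i \<Rightarrow> 'i \<Rightarrow> real"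
  assumes fin: "finite V" and aV: "a \<notin> V" and sym: "\<forall>i\<in>insert a V. \<forall>j\<in>insert a V. X i j = X j i"
  shows "(\<Sum>i\<in>insert a V. \<Sum>j\<in>insert a V. (x(a:=t)) i * X i j * (x(a:=t)) j)
     = t*t*X a a + 2*t*(\<Sum>j\<in>V. X a j * x j) + (\<Sum>i\<in>V. \<Sum>j\<in>V. x i * X i j * x j)"
proof -
  have e1: "(\<Sum>i\<in>V. \<Sum>j\<in>insert a V. (x(a:=t)) i * X i j * (x(a:=t)) j)
      = (\<Sum>i\<in>V. x i * X i a * t + (\<Sum>j\<in>V. x i * X i j * x j))"
  proof (rule sum.cong)
    fix i assume i: "i \<in> V"
    have "(\<Sum>j\<in>V. (x(a:=t)) i * X i j * (x(a:=t)) j) = (\<Sum>j\<in>V. x i * X i j * x j)"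
      by (rule sum.cong) (use i aV in auto)
    then show "(\<Sum>j\<in>insert a V. (x(a:=t)) i * X i j * (x(a:=t)) j) = x i * X i a * t + (\<Sum>j\<in>V. x i * X i j * x j)"
      using i aV fin by (auto simp: sum.insert)
  qed simp
  have e2: "(\<Sum>j\<in>V. (x(a:=t)) a * X a j * (x(a:=t)) j) = t * (\<Sum>j\<in>V. X a j * x j)"
    unfolding sum_distrib_left by (rule sum.cong) (use aV in auto)
  have e3: "(\<Sum>i\<in>V. x i * X i a * t) = t * (\<Sum>j\<in>V. X a j * x j)"
    unfolding sum_distrib_left
  proof (rule sum.cong)
    fix i assume i: "i \<in> V"
    have "X i a = X a i" using sym i by blast
    then show "x i * X i a * t = t * (X a i * x i)" by simp
  qed simp
  have s1: "(\<Sum>i\<in>insert a V. \<Sum>j\<in>insert a V. (x(a:=t)) i * X i j * (x(a:=t)) j)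
     = (\<Sum>j\<in>insert a V. (x(a:=t)) a * X a j * (x(a:=t)) j) + (\<Sum>i\<in>V. \<Sum>j\<in>insert a V. (x(a:=t)) i * X i j * (x(a:=t)) j)"
    by (rule sum.insert[OF fin aV])
  have s2: "(\<Sum>j\<in>insert a V. (x(a:=t)) a * X a j * (x(a:=t)) j) = (x(a:=t)) a * X a a * (x(a:=t)) a + (\<Sum>j\<in>V. (x(a:=t)) a * X a j * (x(a:=t)) j)"
    by (rule sum.insert[OF fin aV])
  show ?thesis unfolding s1 s2 e1 e2 sum.distrib e3 by simp
qed
lemma psd_factor:
  fixes X :: "'i \<Rightarrow> 'i \<Rightarrow> real"
  assumes "finite V"
  shows "(\<forall>i\<in>V. \<forall>j\<in>V. X i j = X j i) \<Longrightarrow> (\<forall>x. 0 \<le> (\<Sum>i\<in>V. \<Sum>j\<in>V. x i * X i j * x j)) \<Longrightarrow>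
    \<exists>q::'i \<Rightarrow> nat \<Rightarrow> real. (\<forall>i k. card V \<le> k \<longrightarrow> q i k = 0) \<and>
       (\<forall>i\<in>V. \<forall>j\<in>V. (\<Sum>k<card V. q i k * q j k) = X i j)"
  using assms
proof (induction V arbitrary: X rule: finite_induct)
  case empty
  then show ?case by (intro exI[of _ "\<lambda>_ _. 0"]) simp
next
  case (insert a V)
  note sym = insert.prems(1) and psd = insert.prems(2)
  define s where "s = X a a"
  have Q: "0 \<le> t * t * s + 2 * t * (\<Sum>j\<in>V. X a j * x j) + (\<Sum>i\<in>V. \<Sum>j\<in>V. x i * X i j * x j)" for x t
  proof -
    have "0 \<le> (\<Sum>i\<in>insert a V. \<Sum>j\<in>insert a V. (x(a:=t)) i * X i j * (x(a:=t)) j)" using psd by blast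
    then show ?thesis unfolding quad_insert[OF insert.hyps(1,2) sym] s_def .
  qed
  have s0: "s \<ge> 0" using Q[where x="\<lambda>_. 0" and t=1] by simp
  have z: "X a j = 0" if "s = 0" "j \<in> V" for j
  proof (rule ccontr)
    assume nz: "X a j \<noteq> 0"
    have "(\<Sum>j'\<in>V. X a j' * (if j' = j then 1 else 0)) = X a j"
      using that insert.hyps(1) by (simp add: if_distrib cong: if_cong)
    moreover have "(\<Sum>i\<in>V. \<Sum>j'\<in>V. (if i = j then 1 else 0) * X i j' * (if j' = j then 1 else 0)) = X j j"
      using that insert.hyps(1) by (simp add: if_distrib[of "\<lambda>z. z * _"] if_distrib[of "\<lambda>z. _ * z"] sum.delta cong: if_cong)
    ultimately have "0 \<le> 2*t*X a j + X j j" for t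
      using Q[where t=t and x="\<lambda>i. if i = j then 1 else 0"] that by simp
    from this[of "-(X j j + 1)/(2 * X a j)"] nz show False by (simp add: field_simps)
  qed
  define c where "c i = X a i / sqrt s" for i
  define X' where "X' i j = X i j - c i * c j" for i j
  have sym': "\<forall>i\<in>V. \<forall>j\<in>V. X' i j = X' j i"
  proof (intro ballI)
    fix i j assume "i \<in> V" "j \<in> V"
    then have "X i j = X j i" using sym by blast
    then show "X' i j = X' j i" unfolding X'_def by (simp add: mult.commute)
  qed
  have psd': "\<forall>x. 0 \<le> (\<Sum>i\<in>V. \<Sum>j\<in>V. x i * X' i j * x j)"
  proof
    fix x :: "'i \<Rightarrow> real"
    define S where "S = (\<Sum>j\<in>V. X a j * x j)"
    define QV where "QV = (\<Sum>i\<in>V. \<Sum>j\<in>V. x i * X i j * x j)"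
    have cs: "(\<Sum>i\<in>V. \<Sum>j\<in>V. x i * (c i * c j) * x j) = (\<Sum>i\<in>V. c i * x i) * (\<Sum>j\<in>V. c j * x j)"
      by (simp add: sum_product algebra_simps)
    have cS: "(\<Sum>i\<in>V. c i * x i) = S / sqrt s"
      unfolding S_def c_def by (simp add: sum_divide_distrib)
    have "(\<Sum>i\<in>V. \<Sum>j\<in>V. x i * X' i j * x j) = QV - (S / sqrt s) * (S / sqrt s)"
      unfolding X'_def QV_def using cs cS by (simp add: algebra_simps sum_subtractf)
    also have "\<dots> = QV - S * S/s" using s0 by (simp add: real_sqrt_mult[symmetric])
    also have "\<dots> \<ge> 0"
    proof (cases "s = 0")
      case True then show ?thesis using Q[where x=x and t=0] unfolding QV_def by simp
    next
      case False
      have "0 \<le> (-S/s)*(-S/s) * s + 2*(-S/s) * S + QV" using Q[where x=x and t="-S/s"] unfolding S_def QV_def by simp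
      also have "\<dots> = QV - S * S/s" using False by (simp add: field_simps)
      finally show ?thesis .
    qed
    finally show "0 \<le> (\<Sum>i\<in>V. \<Sum>j\<in>V. x i * X' i j * x j)" .
  qed
  obtain q' where q'0: "\<forall>i k. card V \<le> k \<longrightarrow> q' i k = 0"
    and q'X: "\<forall>i\<in>V. \<forall>j\<in>V. (\<Sum>k<card V. q' i k * q' j k) = X' i j"
    using insert.IH[OF sym' psd'] insert.hyps(1) by blast
  define n where "n = card V"
  define q where "q i k = (if k < n then (if i = a then 0 else q' i k) else if k = n then c i else 0)" for i k
  have cn: "card (insert a V) = Suc n" using insert.hyps n_def by simp
  have ca: "c a * c j = X a j" if "j \<in> insert a V" for j
  proof (cases "s = 0")
    case True
    then show ?thesis using z that s_def by (auto simp: c_def)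
  next
    case False
    then have "sqrt s * sqrt s = s" using s0 by simp
    then show ?thesis using False s0 unfolding c_def s_def by (simp add: field_simps)
  qed
  have main: "(\<Sum>k<Suc n. q i k * q j k) = X i j" if "i \<in> insert a V" "j \<in> insert a V" for i j
  proof -
    have "(\<Sum>k<Suc n. q i k * q j k) = (\<Sum>k<n. q i k * q j k) + c i * c j"
      by (simp add: q_def)
    also have "(\<Sum>k<n. q i k * q j k) = (if i = a \<or> j = a then 0 else X' i j)"
      using q'X that n_def by (auto simp: q_def)
    finally have eq: "(\<Sum>k<Suc n. q i k * q j k) = (if i = a \<or> j = a then 0 else X' i j) + c i * c j" .
    show ?thesis
    proof (cases "i = a")
      case True then show ?thesis using eq ca that by simp
    next
      case False
      note F = False
      show ?thesis
      proof (cases "j = a")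
        case True
        have "X a i = X i a" using sym that by blast
        then show ?thesis using eq ca[of i] that True F by (simp add: mult.commute)
      next
        case False then show ?thesis using eq F by (simp add: X'_def)
      qed
    qed
  qed
  show ?case
    apply (rule exI[of _ q])
    using main q'0 cn by (auto simp: q_def)
qed



lemma frob_Fmat:
  fixes X :: "'i \<Rightarrow> 'i \<Rightarrow> real"
  assumes "finite V" "a \<in> V" "b \<in> V" "X a b = X b a"
  shows "frob V X (Fmat a b) = X a a + X b b - 2 * X a b"
proof -
  have inner: "(\<Sum>j\<in>V. X i j * Fmat a b j i) = (X i a - X i b) * ((if i = a then 1 else 0) - (if i = b then 1 else 0))" for i
  proof -
    have "(\<Sum>j\<in>V. X i j * Fmat a b j i) = (\<Sum>j\<in>V. (X i j * (if j = a then 1 else 0) - X i j * (if j = b then 1 else 0)) * ((if i = a then 1 else 0) - (if i = b then 1 else 0)))"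
      unfolding Fmat_def by (rule sum.cong) (auto simp: algebra_simps)
    also have "\<dots> = (\<Sum>j\<in>V. X i j * (if j = a then 1 else 0) - X i j * (if j = b then 1 else 0)) * ((if i = a then 1 else 0) - (if i = b then 1 else 0))"
      by (simp add: sum_distrib_right)
    also have "(\<Sum>j\<in>V. X i j * (if j = a then 1 else 0) - X i j * (if j = b then 1 else 0)) = X i a - X i b"
      using assms by (simp add: sum_subtractf if_distrib[of "\<lambda>z. _ * z"] sum.delta' cong: if_cong)
    finally show ?thesis .
  qed
  have "frob V X (Fmat a b) = (\<Sum>i\<in>V. (X i a - X i b) * (if i = a then 1 else 0) - (X i a - X i b) * (if i = b then 1 else 0))"
    unfolding frob_def inner by (simp add: algebra_simps)
  also have "\<dots> = (X a a - X a b) - (X b a - X b b)"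
    using assms by (simp add: sum_subtractf if_distrib[of "\<lambda>z. _ * z"] sum.delta' cong: if_cong)
  finally show ?thesis using assms(4) by simp
qed




lemma frob_sum:
  "frob V X (\<lambda>i j. \<Sum>\<alpha>\<in>A. f \<alpha> i j) = (\<Sum>\<alpha>\<in>A. frob V X (f \<alpha>))"
proof -
  have "frob V X (\<lambda>i j. \<Sum>\<alpha>\<in>A. f \<alpha> i j) = (\<Sum>i\<in>V. \<Sum>j\<in>V. \<Sum>\<alpha>\<in>A. X i j * f \<alpha> j i)"
    unfolding frob_def by (simp add: sum_distrib_left)
  also have "\<dots> = (\<Sum>i\<in>V. \<Sum>\<alpha>\<in>A. \<Sum>j\<in>V. X i j * f \<alpha> j i)"
    by (rule sum.cong[OF refl], rule sum.swap)
  also have "\<dots> = (\<Sum>\<alpha>\<in>A. \<Sum>i\<in>V. \<Sum>j\<in>V. X i j * f \<alpha> j i)"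
    by (rule sum.swap)
  finally show ?thesis unfolding frob_def .
qed


lemma centered_zero:
  fixes M :: "'i \<Rightarrow> 'i \<Rightarrow> real"
  assumes fin: "finite V" and sym: "\<forall>i\<in>V. \<forall>j\<in>V. M i j = M j i"
    and rows: "\<forall>i\<in>V. (\<Sum>j\<in>V. M i j) = 0"
    and D: "\<forall>i\<in>V. \<forall>j\<in>V. M i i + M j j - 2 * M i j = 0"
    and i: "i \<in> V" and j: "j \<in> V"
  shows "M i j = 0"
proof -
  define T where "T = (\<Sum>j\<in>V. M j j)"
  define n where "n = real (card V)"
  have n0: "n > 0" using fin i unfolding n_def by (auto simp: card_gt_0_iff)
  have diag: "n * M k k + T = 0" if k: "k \<in> V" for k
  proof -
    have "0 = (\<Sum>j\<in>V. M k k + M j j - 2 * M k j)" using D k by (intro sum.neutral[symmetric]) blast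
    also have "\<dots> = n * M k k + T - 2 * (\<Sum>j\<in>V. M k j)"
      unfolding T_def n_def by (simp add: sum.distrib sum_subtractf sum_distrib_left)
    finally show ?thesis using rows k by simp
  qed
  have "0 = (\<Sum>k\<in>V. n * M k k + T)" using diag by (intro sum.neutral[symmetric]) blast
  also have "\<dots> = n * T + n * T" unfolding T_def n_def by (simp add: sum.distrib sum_distrib_left)
  finally have "T = 0" using n0 by simp
  then have "M i i = 0" "M j j = 0" using diag[OF i] diag[OF j] n0 by auto
  moreover have "M i i + M j j - 2 * M i j = 0" using D i j by blast
  ultimately show ?thesis by linarith
qed





lemma orth_inner:
  fixes A :: "real^'d^'d"
  assumes "orthogonal_matrix A"
  shows "(A *v x) \<bullet> (A *v y) = x \<bullet> y"
proof -
  have "orthogonal_transformation (\<lambda>x. A *v x)"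
    using assms orthogonal_transformation_matrix[of "\<lambda>x. A *v x"] by (simp add: matrix_vector_mul_linear)
  then show ?thesis unfolding orthogonal_transformation_def by blast
qed

lemma gram_in:
  fixes Gm :: "('g, 'b) monoid_scheme" and \<theta> :: "'g \<Rightarrow> real^'d^'d" and p :: "'g \<times> 'v \<Rightarrow> real^'d"
  assumes grp: "group Gm" and "point_group Gm \<theta>" and "p \<in> C_theta Gm Vh \<theta>"
  shows "gram p \<in> inv_psd_laplacians Gm Vh"
proof -
  interpret G: group Gm by (rule grp)
  have orth: "\<And>g. g \<in> carrier Gm \<Longrightarrow> orthogonal_matrix (\<theta> g)" using assms(2) unfolding point_group_def by blast
  have comp: "\<And>\<gamma> \<alpha> v. \<gamma> \<in> carrier Gm \<Longrightarrow> \<alpha> \<in> carrier Gm \<Longrightarrow> v \<in> Vh \<Longrightarrow> p (\<gamma> \<otimes>\<^bsub>Gm\<^esub> \<alpha>, v) = \<theta> \<gamma> *v p (\<alpha>, v)"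
    using assms(3) unfolding C_theta_def compatible_def by auto
  have cent: "(\<Sum>i\<in>carrier Gm \<times> Vh. p i) = 0" using assms(3) unfolding C_theta_def by auto
  show ?thesis unfolding inv_psd_laplacians_def
  proof (intro CollectI conjI allI ballI)
    fix i j show "gram p i j = gram p j i" unfolding gram_def by (simp add: inner_commute)
  next
    fix x :: "'g \<times> 'v \<Rightarrow> real"
    let ?V = "carrier Gm \<times> Vh"
    have "(\<Sum>i\<in>?V. \<Sum>j\<in>?V. x i * gram p i j * x j) = (\<Sum>i\<in>?V. x i *\<^sub>R p i) \<bullet> (\<Sum>j\<in>?V. x j *\<^sub>R p j)"
      unfolding gram_def inner_sum_left
      by (rule sum.cong[OF refl]) (simp add: inner_sum_right sum_distrib_left algebra_simps)
    then show "0 \<le> (\<Sum>i\<in>?V. \<Sum>j\<in>?V. x i * gram p i j * x j)" by simp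
  next
    fix i assume "i \<in> carrier Gm \<times> Vh"
    show "(\<Sum>j\<in>carrier Gm \<times> Vh. gram p i j) = 0"
      unfolding gram_def inner_sum_right[symmetric] cent by simp
  next
    fix \<alpha> \<beta> \<gamma> u v assume h: "\<alpha> \<in> carrier Gm" "\<beta> \<in> carrier Gm" "\<gamma> \<in> carrier Gm" "u \<in> Vh" "v \<in> Vh"
    show "gram p (\<alpha>, u) (\<beta>, v) = gram p (\<gamma> \<otimes>\<^bsub>Gm\<^esub> \<alpha>, u) (\<gamma> \<otimes>\<^bsub>Gm\<^esub> \<beta>, v)"
      unfolding gram_def using h by (simp add: comp orth_inner orth)
  qed
qed




definition Dm :: "('i \<Rightarrow> 'i \<Rightarrow> real) \<Rightarrow> 'i \<Rightarrow> 'i \<Rightarrow> real" where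
  "Dm Y i j = Y i i + Y j j - 2 * Y i j"

lemma Dm_inv:
  fixes Gm :: "('g, 'b) monoid_scheme"
  assumes grp: "group Gm" and Y: "Y \<in> inv_psd_laplacians Gm Vh"
    and h: "\<alpha> \<in> carrier Gm" "\<gamma> \<in> carrier Gm" "u \<in> Vh" "v \<in> Vh"
  shows "Dm Y (\<alpha>, u) (\<alpha> \<otimes>\<^bsub>Gm\<^esub> \<gamma>, v) = Dm Y (\<one>\<^bsub>Gm\<^esub>, u) (\<gamma>, v)"
proof -
  interpret G: group Gm by (rule grp)
  have I: "\<And>a b c u v. a \<in> carrier Gm \<Longrightarrow> b \<in> carrier Gm \<Longrightarrow> c \<in> carrier Gm \<Longrightarrow> u \<in> Vh \<Longrightarrow> v \<in> Vh \<Longrightarrow>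
     Y (a, u) (b, v) = Y (c \<otimes>\<^bsub>Gm\<^esub> a, u) (c \<otimes>\<^bsub>Gm\<^esub> b, v)"
    using Y unfolding inv_psd_laplacians_def by blast
  let ?i = "inv\<^bsub>Gm\<^esub> \<alpha>"
  have e1: "?i \<otimes>\<^bsub>Gm\<^esub> \<alpha> = \<one>\<^bsub>Gm\<^esub>" using h by simp
  have e2: "?i \<otimes>\<^bsub>Gm\<^esub> (\<alpha> \<otimes>\<^bsub>Gm\<^esub> \<gamma>) = \<gamma>" using h by (simp add: G.m_assoc[symmetric])
  have "Y (\<alpha>, u) (\<alpha>, u) = Y (\<one>\<^bsub>Gm\<^esub>, u) (\<one>\<^bsub>Gm\<^esub>, u)" using I[of \<alpha> \<alpha> ?i u u] h e1 by simp
  moreover have "Y (\<alpha> \<otimes>\<^bsub>Gm\<^esub> \<gamma>, v) (\<alpha> \<otimes>\<^bsub>Gm\<^esub> \<gamma>, v) = Y (\<gamma>, v) (\<gamma>, v)"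
    using I[of "\<alpha> \<otimes>\<^bsub>Gm\<^esub> \<gamma>" "\<alpha> \<otimes>\<^bsub>Gm\<^esub> \<gamma>" ?i v v] h e2 by simp
  moreover have "Y (\<alpha>, u) (\<alpha> \<otimes>\<^bsub>Gm\<^esub> \<gamma>, v) = Y (\<one>\<^bsub>Gm\<^esub>, u) (\<gamma>, v)"
    using I[of \<alpha> "\<alpha> \<otimes>\<^bsub>Gm\<^esub> \<gamma>" ?i u v] h e1 e2 by simp
  ultimately show ?thesis unfolding Dm_def by simp
qed

lemma frob_Fgain:
  fixes Gm :: "('g, 'b) monoid_scheme"
  assumes grp: "group Gm" and fin: "finite (carrier Gm)" "finite Vh" and Y: "Y \<in> inv_psd_laplacians Gm Vh"
    and h: "\<gamma> \<in> carrier Gm" "u \<in> Vh" "v \<in> Vh"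
  shows "frob (carrier Gm \<times> Vh) Y (Fgain Gm u v \<gamma>) = real (card (carrier Gm)) * Dm Y (\<one>\<^bsub>Gm\<^esub>, u) (\<gamma>, v)"
proof -
  interpret G: group Gm by (rule grp)
  have sym: "\<forall>i\<in>carrier Gm \<times> Vh. \<forall>j\<in>carrier Gm \<times> Vh. Y i j = Y j i"
    using Y unfolding inv_psd_laplacians_def by blast
  have "frob (carrier Gm \<times> Vh) Y (Fgain Gm u v \<gamma>) = (\<Sum>\<alpha>\<in>carrier Gm. frob (carrier Gm \<times> Vh) Y (Fmat (\<alpha>, u) (\<alpha> \<otimes>\<^bsub>Gm\<^esub> \<gamma>, v)))"
    unfolding Fgain_def by (rule frob_sum)
  also have "\<dots> = (\<Sum>\<alpha>\<in>carrier Gm. Dm Y (\<one>\<^bsub>Gm\<^esub>, u) (\<gamma>, v))"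
  proof (rule sum.cong[OF refl])
    fix \<alpha> assume a: "\<alpha> \<in> carrier Gm"
    have m: "(\<alpha>, u) \<in> carrier Gm \<times> Vh" "(\<alpha> \<otimes>\<^bsub>Gm\<^esub> \<gamma>, v) \<in> carrier Gm \<times> Vh" using a h by auto
    have "frob (carrier Gm \<times> Vh) Y (Fmat (\<alpha>, u) (\<alpha> \<otimes>\<^bsub>Gm\<^esub> \<gamma>, v)) = Dm Y (\<alpha>, u) (\<alpha> \<otimes>\<^bsub>Gm\<^esub> \<gamma>, v)"
    proof -
      have s: "Y (\<alpha>, u) (\<alpha> \<otimes>\<^bsub>Gm\<^esub> \<gamma>, v) = Y (\<alpha> \<otimes>\<^bsub>Gm\<^esub> \<gamma>, v) (\<alpha>, u)" using sym m by blast
      have f: "finite (carrier Gm \<times> Vh)" using fin by simp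
      show ?thesis unfolding Dm_def by (rule frob_Fmat[OF f m s])
    qed
    also have "\<dots> = Dm Y (\<one>\<^bsub>Gm\<^esub>, u) (\<gamma>, v)" using Dm_inv[OF grp Y a h] .
    finally show "frob (carrier Gm \<times> Vh) Y (Fmat (\<alpha>, u) (\<alpha> \<otimes>\<^bsub>Gm\<^esub> \<gamma>, v)) = Dm Y (\<one>\<^bsub>Gm\<^esub>, u) (\<gamma>, v)" .
  qed
  finally show ?thesis by simp
qed


theorem proposition4p3:
  fixes Gm :: "('g, 'b) monoid_scheme"
    and \<theta> :: "'g \<Rightarrow> real^'d^'d"
    and Vh :: "'v set"
    and Eh :: "('v \<times> 'v \<times> 'g) set"
    and p :: "'g \<times> 'v \<Rightarrow> real^'d"
  assumes "group Gm" and "finite (carrier Gm)"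
    and "point_group Gm \<theta>"
    and "finite Vh"
    and "Eh \<subseteq> Vh \<times> Vh \<times> carrier Gm"
    and "\<forall>(u, v, \<gamma>)\<in>Eh. \<not> (u = v \<and> \<gamma> = \<one>\<^bsub>Gm\<^esub>)"
    and "p \<in> C_theta Gm Vh \<theta>"
    and "universally_rigid (carrier Gm \<times> Vh) (lift_adj Gm Eh) p"
  shows "gram p \<in> inv_psd_laplacians Gm Vh \<and>
         (\<forall>X \<in> inv_psd_laplacians Gm Vh.
            (\<forall>(u, v, \<gamma>)\<in>Eh. frob (carrier Gm \<times> Vh) X (Fgain Gm u v \<gamma>)
                               = frob (carrier Gm \<times> Vh) (gram p) (Fgain Gm u v \<gamma>)) \<longrightarrow>
            (\<forall>i\<in>carrier Gm \<times> Vh. \<forall>j\<in>carrier Gm \<times> Vh. X i j = gram p i j))"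
proof -
  interpret G: group Gm by (rule assms(1))
  let ?V = "carrier Gm \<times> Vh"
  have finV: "finite ?V" using assms(2,4) by simp
  have gin: "gram p \<in> inv_psd_laplacians Gm Vh" by (rule gram_in[OF assms(1,3,7)])
  have Gsym: "\<forall>i\<in>?V. \<forall>j\<in>?V. gram p i j = gram p j i"
    and Grow: "\<forall>i\<in>?V. (\<Sum>j\<in>?V. gram p i j) = 0"
    using gin unfolding inv_psd_laplacians_def by blast+
  have "\<forall>X\<in>inv_psd_laplacians Gm Vh.
            (\<forall>(u, v, \<gamma>)\<in>Eh. frob ?V X (Fgain Gm u v \<gamma>) = frob ?V (gram p) (Fgain Gm u v \<gamma>)) \<longrightarrow>
            (\<forall>i\<in>?V. \<forall>j\<in>?V. X i j = gram p i j)"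
  proof (intro ballI impI)
    fix X i j
    assume XL: "X \<in> inv_psd_laplacians Gm Vh"
      and E: "\<forall>(u, v, \<gamma>)\<in>Eh. frob ?V X (Fgain Gm u v \<gamma>) = frob ?V (gram p) (Fgain Gm u v \<gamma>)"
      and iV: "i \<in> ?V" and jV: "j \<in> ?V"
    have Xsym: "\<forall>i\<in>?V. \<forall>j\<in>?V. X i j = X j i"
      and Xpsd: "\<forall>x. 0 \<le> (\<Sum>i\<in>?V. \<Sum>j\<in>?V. x i * X i j * x j)"
      and Xrow: "\<forall>i\<in>?V. (\<Sum>j\<in>?V. X i j) = 0"
      using XL unfolding inv_psd_laplacians_def by blast+
    have edgeD: "Dm X (\<one>\<^bsub>Gm\<^esub>, u) (\<gamma>, v) = Dm (gram p) (\<one>\<^bsub>Gm\<^esub>, u) (\<gamma>, v)" if e: "(u, v, \<gamma>) \<in> Eh" for u v \<gamma>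
    proof -
      have h: "\<gamma> \<in> carrier Gm" "u \<in> Vh" "v \<in> Vh" using e assms(5) by auto
      have "frob ?V X (Fgain Gm u v \<gamma>) = frob ?V (gram p) (Fgain Gm u v \<gamma>)" using E e by blast
      then have "real (card (carrier Gm)) * Dm X (\<one>\<^bsub>Gm\<^esub>, u) (\<gamma>, v) = real (card (carrier Gm)) * Dm (gram p) (\<one>\<^bsub>Gm\<^esub>, u) (\<gamma>, v)"
        unfolding frob_Fgain[OF assms(1) assms(2) assms(4) XL h] frob_Fgain[OF assms(1) assms(2) assms(4) gin h] .
      moreover have "card (carrier Gm) > 0" using assms(2) G.one_closed by (auto simp: card_gt_0_iff)
      ultimately show ?thesis by simp
    qed
    have adj1: "Dm X (\<alpha>, u) (\<beta>, v) = Dm (gram p) (\<alpha>, u) (\<beta>, v)"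
      if h: "\<alpha> \<in> carrier Gm" "\<beta> \<in> carrier Gm" "u \<in> Vh" "v \<in> Vh" and e: "(u, v, inv\<^bsub>Gm\<^esub> \<alpha> \<otimes>\<^bsub>Gm\<^esub> \<beta>) \<in> Eh"
      for \<alpha> \<beta> u v
    proof -
      have c: "inv\<^bsub>Gm\<^esub> \<alpha> \<otimes>\<^bsub>Gm\<^esub> \<beta> \<in> carrier Gm" using h by simp
      have b: "\<alpha> \<otimes>\<^bsub>Gm\<^esub> (inv\<^bsub>Gm\<^esub> \<alpha> \<otimes>\<^bsub>Gm\<^esub> \<beta>) = \<beta>" using h by (simp add: G.m_assoc[symmetric])
      have "Dm X (\<alpha>, u) (\<beta>, v) = Dm X (\<one>\<^bsub>Gm\<^esub>, u) (inv\<^bsub>Gm\<^esub> \<alpha> \<otimes>\<^bsub>Gm\<^esub> \<beta>, v)"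
        using Dm_inv[OF assms(1) XL h(1) c h(3) h(4)] b by simp
      also have "\<dots> = Dm (gram p) (\<one>\<^bsub>Gm\<^esub>, u) (inv\<^bsub>Gm\<^esub> \<alpha> \<otimes>\<^bsub>Gm\<^esub> \<beta>, v)" by (rule edgeD[OF e])
      also have "\<dots> = Dm (gram p) (\<alpha>, u) (\<beta>, v)"
        using Dm_inv[OF assms(1) gin h(1) c h(3) h(4)] b by simp
      finally show ?thesis .
    qed
    have adjD: "Dm X a b = Dm (gram p) a b" if ab: "a \<in> ?V" "b \<in> ?V" "lift_adj Gm Eh a b" for a b
    proof -
      obtain \<alpha> u where a: "a = (\<alpha>, u)" "\<alpha> \<in> carrier Gm" "u \<in> Vh" using ab(1) by auto
      obtain \<beta> v where b: "b = (\<beta>, v)" "\<beta> \<in> carrier Gm" "v \<in> Vh" using ab(2) by auto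
      from ab(3) have "(u, v, inv\<^bsub>Gm\<^esub> \<alpha> \<otimes>\<^bsub>Gm\<^esub> \<beta>) \<in> Eh \<or> (v, u, inv\<^bsub>Gm\<^esub> \<beta> \<otimes>\<^bsub>Gm\<^esub> \<alpha>) \<in> Eh"
        unfolding lift_adj_def a b by simp
      then show ?thesis
      proof
        assume "(u, v, inv\<^bsub>Gm\<^esub> \<alpha> \<otimes>\<^bsub>Gm\<^esub> \<beta>) \<in> Eh"
        then show ?thesis using adj1[OF a(2) b(2) a(3) b(3)] a b by simp
      next
        assume "(v, u, inv\<^bsub>Gm\<^esub> \<beta> \<otimes>\<^bsub>Gm\<^esub> \<alpha>) \<in> Eh"
        then have 1: "Dm X (\<beta>, v) (\<alpha>, u) = Dm (gram p) (\<beta>, v) (\<alpha>, u)" using adj1[OF b(2) a(2) b(3) a(3)] by simp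
        have s1: "X (\<alpha>, u) (\<beta>, v) = X (\<beta>, v) (\<alpha>, u)" using Xsym ab(1,2) a b by blast
        have s2: "gram p (\<alpha>, u) (\<beta>, v) = gram p (\<beta>, v) (\<alpha>, u)" unfolding gram_def by (simp add: inner_commute)
        show ?thesis using 1 s1 s2 a b unfolding Dm_def by simp
      qed
    qed
    obtain q :: "'g \<times> 'v \<Rightarrow> nat \<Rightarrow> real" where q0: "\<forall>i k. card ?V \<le> k \<longrightarrow> q i k = 0"
      and qX: "\<forall>i\<in>?V. \<forall>j\<in>?V. (\<Sum>k<card ?V. q i k * q j k) = X i j"
      using psd_factor[OF finV Xsym Xpsd] by blast
    define d' where "d' = max (card ?V) CARD('d)"
    have dd: "CARD('d) \<le> d'" unfolding d'_def by simp
    have qd: "\<forall>i k. d' \<le> k \<longrightarrow> q i k = 0" using q0 unfolding d'_def by simp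
    have edq: "(edist d' (q a) (q b))\<^sup>2 = Dm X a b" if ab: "a \<in> ?V" "b \<in> ?V" for a b
    proof -
      have "(\<Sum>k<d'. (q a k - q b k)\<^sup>2) = (\<Sum>k<card ?V. (q a k - q b k)\<^sup>2)"
      proof (rule sum.mono_neutral_right)
        show "finite {..<d'}" by simp
        show "{..<card ?V} \<subseteq> {..<d'}" unfolding d'_def by auto
        show "\<forall>k\<in>{..<d'} - {..<card ?V}. (q a k - q b k)\<^sup>2 = 0"
        proof
          fix k assume "k \<in> {..<d'} - {..<card ?V}"
          then have "card ?V \<le> k" by simp
          then have "q a k = 0" "q b k = 0" using q0 by blast+
          then show "(q a k - q b k)\<^sup>2 = 0" by simp
        qed
      qed
      also have "\<dots> = (\<Sum>k<card ?V. q a k * q a k) + (\<Sum>k<card ?V. q b k * q b k) - 2 * (\<Sum>k<card ?V. q a k * q b k)"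
        by (simp add: power2_eq_square algebra_simps sum.distrib sum_subtractf sum_distrib_left)
      also have "\<dots> = Dm X a b"
      proof -
        have "(\<Sum>k<card ?V. q a k * q a k) = X a a" "(\<Sum>k<card ?V. q b k * q b k) = X b b"
          "(\<Sum>k<card ?V. q a k * q b k) = X a b" using qX ab by blast+
        then show ?thesis unfolding Dm_def by simp
      qed
      finally have S: "(\<Sum>k<d'. (q a k - q b k)\<^sup>2) = Dm X a b" .
      have nn: "0 \<le> (\<Sum>k<d'. (q a k - q b k)\<^sup>2)" by (intro sum_nonneg) simp
      show ?thesis unfolding edist_def using nn S by simp
    qed
    have Gn: "Dm (gram p) a b = (norm (p a - p b))\<^sup>2" for a b
      unfolding Dm_def gram_def by (simp add: power2_norm_eq_inner inner_diff inner_commute)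
    have UR: "\<forall>a\<in>?V. \<forall>b\<in>?V. lift_adj Gm Eh a b \<longrightarrow> edist d' (q a) (q b) = norm (p a - p b)"
    proof (intro ballI impI)
      fix a b assume ab: "a \<in> ?V" "b \<in> ?V" "lift_adj Gm Eh a b"
      have "(edist d' (q a) (q b))\<^sup>2 = (norm (p a - p b))\<^sup>2"
        using edq[OF ab(1,2)] adjD[OF ab] Gn[of a b] by simp
      moreover have "edist d' (q a) (q b) \<ge> 0" unfolding edist_def by (intro real_sqrt_ge_zero sum_nonneg) simp
      ultimately show "edist d' (q a) (q b) = norm (p a - p b)"
        using power2_eq_imp_eq norm_ge_zero by blast
    qed
    have all: "\<forall>a\<in>?V. \<forall>b\<in>?V. edist d' (q a) (q b) = norm (p a - p b)"
      using assms(8) dd qd UR unfolding universally_rigid_def by blast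
    have DD: "\<forall>a\<in>?V. \<forall>b\<in>?V. Dm X a b = Dm (gram p) a b"
    proof (intro ballI)
      fix a b assume ab: "a \<in> ?V" "b \<in> ?V"
      have "edist d' (q a) (q b) = norm (p a - p b)" using all ab by blast
      then show "Dm X a b = Dm (gram p) a b" using edq[OF ab] Gn[of a b] by simp
    qed
    define M where "M a b = X a b - gram p a b" for a b
    have Msym: "\<forall>a\<in>?V. \<forall>b\<in>?V. M a b = M b a"
    proof (intro ballI)
      fix a b assume ab: "a \<in> ?V" "b \<in> ?V"
      have "X a b = X b a" "gram p a b = gram p b a" using Xsym Gsym ab by blast+
      then show "M a b = M b a" unfolding M_def by simp
    qed
    have Mrow: "\<forall>a\<in>?V. (\<Sum>b\<in>?V. M a b) = 0"
    proof (intro ballI)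
      fix a assume a: "a \<in> ?V"
      have "(\<Sum>b\<in>?V. X a b) = 0" "(\<Sum>b\<in>?V. gram p a b) = 0" using Xrow Grow a by blast+
      then show "(\<Sum>b\<in>?V. M a b) = 0" unfolding M_def by (simp add: sum_subtractf)
    qed
    have MD: "\<forall>a\<in>?V. \<forall>b\<in>?V. M a a + M b b - 2 * M a b = 0"
    proof (intro ballI)
      fix a b assume ab: "a \<in> ?V" "b \<in> ?V"
      have "Dm X a b = Dm (gram p) a b" using DD ab by blast
      then show "M a a + M b b - 2 * M a b = 0" unfolding M_def Dm_def by simp
    qed
    have "M i j = 0" by (rule centered_zero[OF finV Msym Mrow MD iV jV])
    then show "X i j = gram p i j" unfolding M_def by simp
  qed
  with gin show ?thesis by blast
qed


end
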